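(* Let $F$ be a field of characteristic $0$, let $k$ be a positive integer and $1\le t\le k$, and let $m,l_1,\dots,l_t$ be non-negative integers with $n=l_1+\cdots+l_t+m$. Let $\psi\colon V_n\to V_{m,l_1,\dots,l_t}$ be the linear isomorphism induced by the substitution $x_i\mapsto x^{1}_{i}$ if $1\le i\le l_1$; $x_i\mapsto x^{2}_{i-l_1}$ if $l_1+1\le i\le l_1+l_2$; $\dots$; $x_i\mapsto x^{t}_{i-(l_1+\cdots+l_{t-1})}$ if $l_1+\cdots+l_{t-1}+1\le i\le l_1+\cdots+l_t$; and $x_i\mapsto z_{i-(l_1+\cdots+l_t)}$ otherwise. Then: (1) $\psi(V_n\cap T(E))=V_{m,l_1,\dots,l_t}\cap T_{\mathbb{Z}}(E^{\infty})$; (2) if $1\cdot l_1+2\cdot l_2+\cdots+t\cdot l_t\le k$, then $\psi(V_n\cap T(E))=V_{m,l_1,\dots,l_t}\cap T_{\mathbb{Z}}(E^{k^\ast})$.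
   Context: $L$ is a vector space over $F$ with basis $e_1,e_2,\dots$, and $E$ is its unital Grassmann algebra (basis $1$ and $e_{i_1}\cdots e_{i_k}$, $i_1<\cdots<i_k$, with $e_ie_j=-e_je_i$). A $\mathbb{Z}$-grading on $E$ is induced by assigning degrees to the $e_i$ and giving a basis monomial the sum of the degrees of its factors ($1$ has degree $0$). $E^{k^\ast}$: $\|e_i\|=1$ for $i=1,\dots,k$ and $\|e_i\|=0$ for $i>k$. $E^{\infty}$: $\|e_i\|=0$ for $i$ even and $\|e_i\|=1$ for $i$ odd. $T(E)$ is the set of ordinary polynomial identities of $E$ in the free associative algebra, and $V_n$ is the space of multilinear polynomials in $x_1,\dots,x_n$. $F\langle X|\mathbb{Z}\rangle$ is the free unital associative algebra on variables each of which has an integer degree $\alpha(x)$ (countably many of each degree); $f(x_1,\dots,x_r)$ is a $\mathbb{Z}$-graded identity of a $\mathbb{Z}$-graded algebra $A$ if it vanishes whenever each $x_j$ is replaced by an element of $A_{\alpha(x_j)}$; $T_{\mathbb{Z}}(A)$ is the set of such. $V_{m,l_1,\dots,l_t}$ is the space of multilinear graded polynomials in the variables $z_1,\dots,z_m$ of degree $0$, $x^1_1,\dots,x^1_{l_1}$ of degree $1$, $\dots$, $x^t_1,\dots,x^t_{l_t}$ of degree $t$. *)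

theory Defs
  imports Main
begin

text \<open>An element of E is a finitely supported coefficient function on basis monomials
  e_S = e_{i_1} ... e_{i_k} (i_1 < ... < i_k), S a finite subset of {1,2,...};
  the empty set corresponds to the unit 1.\<close>

type_synonym 'a grass = "nat set \<Rightarrow> 'a"

definition grass_elem :: "'a::zero grass \<Rightarrow> bool" where
  "grass_elem g \<longleftrightarrow> finite {S. g S \<noteq> 0} \<and> (\<forall>S. g S \<noteq> 0 \<longrightarrow> finite S \<and> S \<subseteq> {1..})"

definition grass_zero :: "'a::zero grass" where
  "grass_zero = (\<lambda>S. 0)"

definition grass_one :: "'a::{zero,one} grass" where
  "grass_one = (\<lambda>S. if S = {} then 1 else 0)"

text \<open>Sign of e_S e_T = sign * e_{S \<union> T} for disjoint S, T.\<close>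
definition grass_sign :: "nat set \<Rightarrow> nat set \<Rightarrow> 'a::comm_ring_1" where
  "grass_sign S T = (-1) ^ card {(i, j). i \<in> S \<and> j \<in> T \<and> j < i}"

definition grass_mult :: "'a::comm_ring_1 grass \<Rightarrow> 'a grass \<Rightarrow> 'a grass" where
  "grass_mult g h = (\<lambda>U. \<Sum>(S, T) \<in> {(S, T). g S \<noteq> 0 \<and> h T \<noteq> 0 \<and> S \<inter> T = {} \<and> S \<union> T = U}.
      grass_sign S T * g S * h T)"

definition grass_prod :: "'a::comm_ring_1 grass list \<Rightarrow> 'a grass" where
  "grass_prod xs = foldr grass_mult xs grass_one"

text \<open>Homogeneous component of degree d for the grading given by deg e_i = \<delta> i.\<close>
definition grass_comp :: "(nat \<Rightarrow> int) \<Rightarrow> int \<Rightarrow> 'a::zero grass set" where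
  "grass_comp \<delta> d = {g. grass_elem g \<and> (\<forall>S. g S \<noteq> 0 \<longrightarrow> (\<Sum>i\<in>S. \<delta> i) = d)}"

definition delta_kstar :: "nat \<Rightarrow> nat \<Rightarrow> int" where
  "delta_kstar k i = (if 1 \<le> i \<and> i \<le> k then 1 else 0)"

definition delta_inf :: "nat \<Rightarrow> int" where
  "delta_inf i = (if odd i then 1 else 0)"

text \<open>A polynomial in variables of type 'v is a finitely supported coefficient function
  on words (monomials).\<close>
type_synonym ('v, 'a) ncpoly = "'v list \<Rightarrow> 'a"

definition ncpoly :: "('v, 'a::zero) ncpoly \<Rightarrow> bool" where
  "ncpoly f \<longleftrightarrow> finite {w. f w \<noteq> 0}"

definition eval_ncpoly :: "('v, 'a::comm_ring_1) ncpoly \<Rightarrow> ('v \<Rightarrow> 'a grass) \<Rightarrow> 'a grass" where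
  "eval_ncpoly f \<phi> = (\<lambda>U. \<Sum>w\<in>{w. f w \<noteq> 0}. f w * grass_prod (map \<phi> w) U)"

definition ordinary_ids :: "(nat, 'a::comm_ring_1) ncpoly set" where
  "ordinary_ids = {f. ncpoly f \<and>
     (\<forall>\<phi>. (\<forall>i. grass_elem (\<phi> i)) \<longrightarrow> eval_ncpoly f \<phi> = grass_zero)}"

text \<open>F<X|Z>: variables are pairs (d, i), d the integer degree; countably many of each degree.
  T_Z(E) for the grading \<delta>.\<close>
definition graded_ids :: "(nat \<Rightarrow> int) \<Rightarrow> (int \<times> nat, 'a::comm_ring_1) ncpoly set" where
  "graded_ids \<delta> = {f. ncpoly f \<and>
     (\<forall>\<phi>. (\<forall>v. \<phi> v \<in> grass_comp \<delta> (fst v)) \<longrightarrow> eval_ncpoly f \<phi> = grass_zero)}"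

definition multilin_ord :: "nat \<Rightarrow> (nat, 'a::zero) ncpoly set" where
  "multilin_ord n = {f. \<forall>w. f w \<noteq> 0 \<longrightarrow> distinct w \<and> set w = {1..n}}"

text \<open>Graded variables: z_i = (0, i) for i = 1..m and x^j_i = (j, i) for j = 1..t, i = 1..l_j.\<close>
definition graded_vars :: "nat \<Rightarrow> nat \<Rightarrow> (nat \<Rightarrow> nat) \<Rightarrow> (int \<times> nat) set" where
  "graded_vars m t l = {(0, i) | i. 1 \<le> i \<and> i \<le> m} \<union>
      {(int j, i) | j i. 1 \<le> j \<and> j \<le> t \<and> 1 \<le> i \<and> i \<le> l j}"

definition multilin_graded :: "nat \<Rightarrow> nat \<Rightarrow> (nat \<Rightarrow> nat) \<Rightarrow> (int \<times> nat, 'a::zero) ncpoly set" where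
  "multilin_graded m t l = {f. \<forall>w. f w \<noteq> 0 \<longrightarrow> distinct w \<and> set w = graded_vars m t l}"

definition psum :: "(nat \<Rightarrow> nat) \<Rightarrow> nat \<Rightarrow> nat" where
  "psum l j = (\<Sum>r = 1..j. l r)"

definition psi_var :: "nat \<Rightarrow> (nat \<Rightarrow> nat) \<Rightarrow> nat \<Rightarrow> int \<times> nat" where
  "psi_var t l i = (if i \<le> psum l t
      then (let j = (LEAST j. i \<le> psum l j) in (int j, i - psum l (j - 1)))
      else (0, i - psum l t))"

definition rename_vars :: "('v \<Rightarrow> 'w) \<Rightarrow> ('v, 'a::comm_monoid_add) ncpoly \<Rightarrow> ('w, 'a) ncpoly" where
  "rename_vars \<rho> f = (\<lambda>w'. \<Sum>w\<in>{w. f w \<noteq> 0 \<and> map \<rho> w = w'}. f w)"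

end

theory Submission
  imports Defs
begin


definition gmono :: "'a::zero \<Rightarrow> nat set \<Rightarrow> 'a grass" where
  "gmono c A = (\<lambda>U. if U = A then c else 0)"

lemma grass_mult_gmono:
  "grass_mult (gmono c A) (gmono d B :: 'a::comm_ring_1 grass) =
     (if A \<inter> B = {} then gmono (grass_sign A B * c * d) (A \<union> B) else (\<lambda>U. 0))"
proof (rule ext)
  fix U
  show "grass_mult (gmono c A) (gmono d B) U =
     (if A \<inter> B = {} then gmono (grass_sign A B * c * d) (A \<union> B) else (\<lambda>U. 0)) U"
  proof (cases "c \<noteq> 0 \<and> d \<noteq> 0 \<and> A \<inter> B = {} \<and> A \<union> B = U")
    case True
    then have "{(S, T). gmono c A S \<noteq> 0 \<and> gmono d B T \<noteq> 0 \<and> S \<inter> T = {} \<and> S \<union> T = U} = {(A,B)}"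
      by (auto simp: gmono_def split: if_splits)
    then show ?thesis using True by (simp add: grass_mult_def gmono_def)
  next
    case False
    then have "{(S, T). gmono c A S \<noteq> 0 \<and> gmono d B T \<noteq> 0 \<and> S \<inter> T = {} \<and> S \<union> T = U} = {}"
      by (auto simp: gmono_def split: if_splits)
    then show ?thesis using False by (auto simp: grass_mult_def gmono_def)
  qed
qed

lemma grass_mult_zero_right: "grass_mult g (\<lambda>U. 0) = (\<lambda>U. 0)"
  by (simp add: grass_mult_def)

fun gQ :: "(nat \<Rightarrow> nat set) \<Rightarrow> nat list \<Rightarrow> 'a::comm_ring_1" where
  "gQ S [] = 1"
| "gQ S (x # w) = grass_sign (S x) (\<Union>(S ` set w)) * gQ S w"

fun gpd :: "(nat \<Rightarrow> nat set) \<Rightarrow> nat list \<Rightarrow> bool" where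
  "gpd S [] = True"
| "gpd S (x # w) = (S x \<inter> \<Union>(S ` set w) = {} \<and> gpd S w)"

lemma grass_prod_gmono:
  "grass_prod (map (\<lambda>i. gmono (c i) (S i)) w) =
    (if gpd S w then gmono ((\<Prod>x\<leftarrow>w. c x) * (gQ S w :: 'a::comm_ring_1)) (\<Union>(S ` set w)) else (\<lambda>U. 0))"
proof (induction w)
  case Nil
  then show ?case by (auto simp: grass_prod_def grass_one_def gmono_def)
next
  case (Cons x w)
  have "grass_prod (map (\<lambda>i. gmono (c i) (S i)) (x # w)) =
     grass_mult (gmono (c x) (S x)) (grass_prod (map (\<lambda>i. gmono (c i) (S i)) w))"
    by (simp add: grass_prod_def)
  also have "\<dots> = (if gpd S (x # w) then gmono ((\<Prod>x\<leftarrow>x # w. c x) * (gQ S (x # w) :: 'a)) (\<Union>(S ` set (x # w))) else (\<lambda>U. 0))"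
    using Cons by (auto simp: grass_mult_gmono grass_mult_zero_right mult_ac)
  finally show ?case .
qed

lemma grass_elem_mult:
  assumes g: "grass_elem g" and h: "grass_elem h"
  shows "grass_elem (grass_mult g h)"
proof -
  have sub: "{U. grass_mult g h U \<noteq> 0} \<subseteq> (\<lambda>(S,T). S \<union> T) ` ({S. g S \<noteq> 0} \<times> {T. h T \<noteq> 0})"
  proof
    fix U assume "U \<in> {U. grass_mult g h U \<noteq> 0}"
    have "{(S, T). g S \<noteq> 0 \<and> h T \<noteq> 0 \<and> S \<inter> T = {} \<and> S \<union> T = U} \<noteq> {}"
    proof
      assume "{(S, T). g S \<noteq> 0 \<and> h T \<noteq> 0 \<and> S \<inter> T = {} \<and> S \<union> T = U} = {}"
      then have "grass_mult g h U = 0" unfolding grass_mult_def by (simp only: sum.empty)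
      then show False using \<open>U \<in> {U. grass_mult g h U \<noteq> 0}\<close> by simp
    qed
    then show "U \<in> (\<lambda>(S,T). S \<union> T) ` ({S. g S \<noteq> 0} \<times> {T. h T \<noteq> 0})" by auto
  qed
  have "finite {U. grass_mult g h U \<noteq> 0}"
    using g h by (intro finite_subset[OF sub]) (auto simp: grass_elem_def)
  moreover have "finite U \<and> U \<subseteq> {1..}" if "grass_mult g h U \<noteq> 0" for U
  proof -
    from that sub obtain S T where "g S \<noteq> 0" "h T \<noteq> 0" "U = S \<union> T" by blast
    then show ?thesis using g h unfolding grass_elem_def by blast
  qed
  ultimately show ?thesis by (auto simp: grass_elem_def)
qed

lemma grass_elem_one: "grass_elem grass_one"
  by (simp add: grass_elem_def grass_one_def)

lemma grass_elem_prod: "(\<forall>x\<in>set xs. grass_elem x) \<Longrightarrow> grass_elem (grass_prod xs)"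
  by (induction xs) (auto simp: grass_prod_def grass_elem_one grass_elem_mult)

definition gadd :: "'a::monoid_add grass \<Rightarrow> 'a grass \<Rightarrow> 'a grass" where
  "gadd a b = (\<lambda>U. a U + b U)"

lemma grass_elem_add: "grass_elem a \<Longrightarrow> grass_elem b \<Longrightarrow> grass_elem (gadd a b)"
proof -
  assume a: "grass_elem a" and b: "grass_elem b"
  have "{S. gadd a b S \<noteq> 0} \<subseteq> {S. a S \<noteq> 0} \<union> {S. b S \<noteq> 0}" by (auto simp: gadd_def)
  moreover have "a S \<noteq> 0 \<or> b S \<noteq> 0" if "gadd a b S \<noteq> 0" for S
    using that by (auto simp: gadd_def)
  ultimately show ?thesis using a b unfolding grass_elem_def
    by (meson finite_Un finite_subset)
qed

lemma grass_elem_zero: "grass_elem (\<lambda>U. 0)"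
  by (simp add: grass_elem_def)

lemma grass_elem_gmono: "finite A \<Longrightarrow> A \<subseteq> {1..} \<Longrightarrow> grass_elem (gmono c A)"
proof -
  assume "finite A" "A \<subseteq> {1..}"
  moreover have "{S. gmono c A S \<noteq> 0} \<subseteq> {A}" by (auto simp: gmono_def)
  ultimately show ?thesis unfolding grass_elem_def
    by (auto intro: finite_subset simp: gmono_def split: if_splits)
qed

lemma grass_mult_finite:
  assumes "finite U"
  shows "grass_mult g h U = (\<Sum>(S,T)\<in>{(S,T). S \<union> T = U \<and> S \<inter> T = {}}. grass_sign S T * g S * h T)"
  unfolding grass_mult_def
proof (rule sum.mono_neutral_left)
  show "finite {(S,T). S \<union> T = U \<and> S \<inter> T = {}}"
    by (rule finite_subset[of _ "Pow U \<times> Pow U"]) (auto simp: assms)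
qed auto

lemma grass_mult_infinite:
  assumes "grass_elem g" "grass_elem h" "infinite U"
  shows "grass_mult g h U = 0"
proof -
  have E: "{(S, T). g S \<noteq> 0 \<and> h T \<noteq> 0 \<and> S \<inter> T = {} \<and> S \<union> T = U} = {}"
    using assms by (auto simp: grass_elem_def)
  show ?thesis unfolding grass_mult_def E by simp
qed

lemma grass_mult_add_left:
  assumes "grass_elem a" "grass_elem b" "grass_elem h"
  shows "grass_mult (gadd a b) h = gadd (grass_mult a h) (grass_mult b h)"
proof (rule ext)
  fix U
  show "grass_mult (gadd a b) h U = (gadd (grass_mult a h) (grass_mult b h)) U"
  proof (cases "finite U")
    case True
    then show ?thesis
      by (simp add: grass_mult_finite sum.distrib[symmetric] ring_distribs case_prod_beta gadd_def)
  next
    case False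
    then show ?thesis using assms grass_elem_add[OF assms(1,2)] by (simp add: grass_mult_infinite gadd_def)
  qed
qed

lemma grass_mult_add_right:
  assumes "grass_elem a" "grass_elem b" "grass_elem h"
  shows "grass_mult h (gadd a b) = gadd (grass_mult h a) (grass_mult h b)"
proof (rule ext)
  fix U
  show "grass_mult h (gadd a b) U = (gadd (grass_mult h a) (grass_mult h b)) U"
  proof (cases "finite U")
    case True
    then show ?thesis
      by (simp add: grass_mult_finite sum.distrib[symmetric] ring_distribs case_prod_beta gadd_def)
  next
    case False
    then show ?thesis using assms grass_elem_add[OF assms(1,2)] by (simp add: grass_mult_infinite gadd_def)
  qed
qed



lemma pairs_finite: "finite A \<Longrightarrow> finite {(i, j). i \<in> A \<and> j \<in> B \<and> j < (i::nat)}"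
  by (rule finite_subset[of _ "Sigma A (\<lambda>i. {..<i})"]) auto

lemma grass_sign_empty: "grass_sign A {} = 1"
  by (simp add: grass_sign_def)

lemma grass_sign_union_right:
  assumes "finite A" "B \<inter> C = {}"
  shows "grass_sign A (B \<union> C) = grass_sign A B * grass_sign A C"
proof -
  have "{(i, j). i \<in> A \<and> j \<in> B \<union> C \<and> j < i} =
        {(i, j). i \<in> A \<and> j \<in> B \<and> j < i} \<union> {(i, j). i \<in> A \<and> j \<in> C \<and> j < i}" by auto
  moreover have "card ({(i, j). i \<in> A \<and> j \<in> B \<and> j < i} \<union> {(i, j). i \<in> A \<and> j \<in> C \<and> j < i})
     = card {(i, j). i \<in> A \<and> j \<in> B \<and> j < i} + card {(i, j). i \<in> A \<and> j \<in> C \<and> j < i}"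
    using assms by (intro card_Un_disjoint pairs_finite) auto
  ultimately show ?thesis by (simp add: grass_sign_def power_add)
qed

lemma grass_sign_Union:
  assumes "finite A" "finite I" "\<forall>x\<in>I. \<forall>y\<in>I. x \<noteq> y \<longrightarrow> S x \<inter> S y = {}"
  shows "grass_sign A (\<Union>(S ` I)) = (\<Prod>y\<in>I. grass_sign A (S y))"
  using assms(2,3)
proof (induction I rule: finite_induct)
  case empty
  then show ?case by (simp add: grass_sign_empty)
next
  case (insert x F)
  have "S x \<inter> \<Union>(S ` F) = {}"
  proof (rule equals0I)
    fix a assume "a \<in> S x \<inter> \<Union>(S ` F)"
    then obtain y where "y \<in> F" "a \<in> S x" "a \<in> S y" by blast
    moreover have "x \<noteq> y" using \<open>y \<in> F\<close> insert.hyps(2) by blast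
    ultimately show False using insert.prems \<open>y \<in> F\<close> by blast
  qed
  then show ?case using insert assms(1) by (simp add: grass_sign_union_right)
qed

lemma grass_sign_swap:
  assumes "finite A" "finite B" "A \<inter> B = {}"
  shows "grass_sign A B * grass_sign B A = ((-1) ^ (card A * card B) :: 'a::comm_ring_1)"
proof -
  let ?X = "{(i, j). i \<in> A \<and> j \<in> B \<and> j < i}"
  let ?Y = "{(i, j). i \<in> B \<and> j \<in> A \<and> j < i}"
  let ?Y' = "{(i, j). i \<in> A \<and> j \<in> B \<and> i < j}"
  have "?Y' = prod.swap ` ?Y" by auto
  then have cY: "card ?Y = card ?Y'" by (simp add: card_image)
  have U: "?X \<union> ?Y' = A \<times> B" using assms(3) by (auto simp: linorder_neq_iff)
  have "card (?X \<union> ?Y') = card ?X + card ?Y'"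
    by (rule card_Un_disjoint) (auto intro: finite_subset[OF _ finite_cartesian_product[OF assms(1,2)]])
  then have "card ?X + card ?Y = card A * card B" using U cY by (simp add: card_cartesian_product)
  then show ?thesis by (simp add: grass_sign_def power_add[symmetric])
qed

lemma grass_sign_sq: "grass_sign A B * grass_sign A B = (1::'a::comm_ring_1)"
  by (simp add: grass_sign_def power_add[symmetric])

lemma neg_one_pow_parity:
  "even a = even b \<Longrightarrow> ((-1::'a::comm_ring_1) ^ a) = (-1) ^ b"
  by (cases "even a") (auto simp: minus_one_power_iff)

lemma grass_sign_sym:
  assumes "finite A" "finite B" "finite C" "finite D" "A \<inter> B = {}" "C \<inter> D = {}"
    "even (card A) = even (card C)" "even (card B) = even (card D)"
  shows "grass_sign A B * grass_sign C D = (grass_sign B A * grass_sign D C :: 'a::comm_ring_1)"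
proof -
  let ?u = "grass_sign A B * grass_sign C D :: 'a"
  let ?v = "grass_sign B A * grass_sign D C :: 'a"
  have "?u * ?v = (grass_sign A B * grass_sign B A) * (grass_sign C D * grass_sign D C)"
    by (simp add: mult_ac)
  also have "\<dots> = (-1) ^ (card A * card B) * (-1) ^ (card C * card D)"
    using assms by (simp add: grass_sign_swap)
  also have "\<dots> = (-1) ^ (card C * card D) * (-1) ^ (card C * card D)"
    using assms(7,8) by (subst neg_one_pow_parity[of "card A * card B" "card C * card D"]) auto
  also have "\<dots> = 1" by (simp add: power_add[symmetric])
  finally have uv: "?u * ?v = 1" .
  have vv: "?v * ?v = 1"
    by (metis (no_types, lifting) grass_sign_sq mult.assoc mult.left_commute mult_1_right)
  have "?u = ?u * (?v * ?v)" using vv by simp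
  also have "\<dots> = ?v" using uv by (metis mult.assoc mult_1_left)
  finally show ?thesis .
qed

definition PP :: "(nat \<Rightarrow> nat \<Rightarrow> 'a::comm_ring_1) \<Rightarrow> nat set \<Rightarrow> 'a" where
  "PP R A = (\<Prod>x\<in>A. \<Prod>y\<in>A. if y < x then R x y else 1)"

lemma PP_empty: "PP R {} = 1" by (simp add: PP_def)

lemma PP_insert:
  assumes "finite A" "z \<notin> A" "\<forall>y\<in>A. R z y = R y z"
  shows "PP R (insert z A) = PP R A * (\<Prod>y\<in>A. R z y)"
proof -
  have "PP R (insert z A) = (\<Prod>y\<in>insert z A. if y < z then R z y else 1) *
      (\<Prod>x\<in>A. \<Prod>y\<in>insert z A. if y < x then R x y else 1)"
    unfolding PP_def using assms by (simp add: prod.insert)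
  also have "(\<Prod>y\<in>insert z A. if y < z then R z y else 1) = (\<Prod>y\<in>A. if y < z then R z y else 1)"
    using assms by (simp add: prod.insert)
  also have "(\<Prod>x\<in>A. \<Prod>y\<in>insert z A. if y < x then R x y else 1) =
       (\<Prod>x\<in>A. (if z < x then R x z else 1) * (\<Prod>y\<in>A. if y < x then R x y else 1))"
    using assms by (intro prod.cong) (auto simp: prod.insert)
  also have "\<dots> = (\<Prod>x\<in>A. if z < x then R x z else 1) * PP R A"
    by (simp add: PP_def prod.distrib)
  finally have "PP R (insert z A) =
     ((\<Prod>y\<in>A. if y < z then R z y else 1) * (\<Prod>x\<in>A. if z < x then R x z else 1)) * PP R A"
    by (simp add: mult_ac)
  also have "(\<Prod>y\<in>A. if y < z then R z y else 1) * (\<Prod>x\<in>A. if z < x then R x z else 1)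
     = (\<Prod>y\<in>A. (if y < z then R z y else 1) * (if z < y then R y z else 1))"
    by (simp add: prod.distrib)
  also have "\<dots> = (\<Prod>y\<in>A. R z y)"
    using assms by (intro prod.cong) (auto simp: linorder_neq_iff)
  finally show ?thesis by (simp add: mult_ac)
qed

lemma gQ_sq: "gQ S w * gQ S w = (1::'a::comm_ring_1)"
proof (induction w)
  case Nil then show ?case by simp
next
  case (Cons x w)
  have "gQ S (x # w) * gQ S (x # w) =
     (grass_sign (S x) (\<Union>(S ` set w)) * grass_sign (S x) (\<Union>(S ` set w))) * (gQ S w * (gQ S w :: 'a))"
    by (simp add: mult_ac)
  then show ?case using Cons by (simp add: grass_sign_sq)
qed

lemma gQ_pair:
  assumes "distinct w"
    and "\<forall>x\<in>set w. finite (S x) \<and> finite (T x)"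
    and "\<forall>x\<in>set w. \<forall>y\<in>set w. x \<noteq> y \<longrightarrow> S x \<inter> S y = {} \<and> T x \<inter> T y = {}"
    and "\<forall>x\<in>set w. even (card (S x)) = even (card (T x))"
  shows "gQ S w * gQ T w = (PP (\<lambda>x y. grass_sign (S x) (S y) * grass_sign (T x) (T y)) (set w) :: 'a::comm_ring_1)"
  using assms
proof (induction w)
  case Nil then show ?case by (simp add: PP_empty)
next
  case (Cons x w)
  let ?R = "\<lambda>x y. grass_sign (S x) (S y) * grass_sign (T x) (T y) :: 'a"
  have "gQ S (x # w) * gQ T (x # w) =
     (grass_sign (S x) (\<Union>(S ` set w)) * grass_sign (T x) (\<Union>(T ` set w))) * (gQ S w * (gQ T w :: 'a))"
    by (simp add: mult_ac)
  also have "grass_sign (S x) (\<Union>(S ` set w)) = (\<Prod>y\<in>set w. grass_sign (S x) (S y) :: 'a)"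
    using Cons.prems by (intro grass_sign_Union) auto
  also have "grass_sign (T x) (\<Union>(T ` set w)) = (\<Prod>y\<in>set w. grass_sign (T x) (T y) :: 'a)"
    using Cons.prems by (intro grass_sign_Union) auto
  also have "gQ S w * gQ T w = PP ?R (set w)"
    using Cons by auto
  also have "(\<Prod>y\<in>set w. grass_sign (S x) (S y)) * (\<Prod>y\<in>set w. grass_sign (T x) (T y)) * PP ?R (set w)
      = PP ?R (set w) * (\<Prod>y\<in>set w. ?R x y)"
    by (simp add: prod.distrib mult_ac)
  also have "\<dots> = PP ?R (insert x (set w))"
  proof (rule PP_insert[symmetric])
    show "\<forall>y\<in>set w. ?R x y = ?R y x"
    proof
      fix y assume y: "y \<in> set w"
      then have "x \<noteq> y" using Cons.prems by auto
      then show "?R x y = ?R y x"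
        using Cons.prems y by (intro grass_sign_sym) auto
    qed
  qed (use Cons.prems in auto)
  finally show ?case by simp
qed



definition mlin :: "nat \<Rightarrow> (nat, 'a::zero) ncpoly \<Rightarrow> bool" where
  "mlin n f \<longleftrightarrow> (\<forall>w. f w \<noteq> 0 \<longrightarrow> distinct w \<and> set w = {1..n})"

lemma eval_cong:
  assumes "mlin n f" "\<forall>i\<in>{1..n}. \<phi> i = \<psi> i"
  shows "eval_ncpoly f \<phi> = eval_ncpoly f \<psi>"
proof -
  have "grass_prod (map \<phi> w) = grass_prod (map \<psi> w)" if "f w \<noteq> 0" for w
  proof -
    have "map \<phi> w = map \<psi> w" using assms that unfolding mlin_def by (intro map_cong) auto
    then show ?thesis by (rule arg_cong)
  qed
  then show ?thesis unfolding eval_ncpoly_def by (intro ext sum.cong) auto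
qed

lemma grass_prod_Cons: "grass_prod (y # ys) = grass_mult y (grass_prod ys)"
  by (simp add: grass_prod_def)

lemma grass_prod_add_slot:
  assumes "distinct w" "\<forall>x. grass_elem (\<phi> x)" "grass_elem a" "grass_elem b" "i \<in> set w"
  shows "grass_prod (map (\<phi>(i := gadd a b)) w) =
     gadd (grass_prod (map (\<phi>(i := a)) w)) (grass_prod (map (\<phi>(i := b)) w))"
  using assms
proof (induction w)
  case Nil then show ?case by simp
next
  case (Cons x w)
  have ge: "\<forall>y. grass_elem ((\<phi>(i := c)) y)" if "grass_elem c" for c
    using Cons.prems that by auto
  show ?case
  proof (cases "x = i")
    case True
    then have "i \<notin> set w" using Cons.prems by auto
    then have m: "map (\<phi>(i := c)) w = map \<phi> w" for c by (intro map_cong) auto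
    have "grass_elem (grass_prod (map \<phi> w))" using Cons.prems by (intro grass_elem_prod) auto
    moreover have hx: "grass_prod (map (\<phi>(i := c)) (x # w)) = grass_mult c (grass_prod (map \<phi> w))" for c
    proof -
      have eq: "map (\<phi>(i := c)) (x # w) = c # map \<phi> w" using True m by simp
      show ?thesis by (simp only: eq) (simp add: grass_prod_def)
    qed
    ultimately show ?thesis using Cons.prems
      by (simp only: hx grass_mult_add_left)
  next
    case False
    then have iw: "i \<in> set w" using Cons.prems by auto
    have pa: "grass_elem (grass_prod (map (\<phi>(i := a)) w))" using Cons.prems
      by (intro grass_elem_prod) auto
    have pb: "grass_elem (grass_prod (map (\<phi>(i := b)) w))" using Cons.prems
      by (intro grass_elem_prod) auto
    have hc: "grass_prod (map (\<phi>(i := c)) (x # w)) = grass_mult (\<phi> x) (grass_prod (map (\<phi>(i := c)) w))" for c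
      by (simp only: list.map fun_upd_other[OF False] grass_prod_Cons)
    have "grass_prod (map (\<phi>(i := gadd a b)) (x # w)) =
        grass_mult (\<phi> x) (grass_prod (map (\<phi>(i := gadd a b)) w))"
      by (rule hc)
    also have "\<dots> = grass_mult (\<phi> x) (gadd (grass_prod (map (\<phi>(i := a)) w)) (grass_prod (map (\<phi>(i := b)) w)))"
    proof -
      have IH': "grass_prod (map (\<phi>(i := gadd a b)) w) =
         gadd (grass_prod (map (\<phi>(i := a)) w)) (grass_prod (map (\<phi>(i := b)) w))"
        by (rule Cons.IH) (use Cons.prems iw in auto)
      show ?thesis by (simp only: IH')
    qed
    also have "\<dots> = gadd (grass_mult (\<phi> x) (grass_prod (map (\<phi>(i := a)) w)))
                          (grass_mult (\<phi> x) (grass_prod (map (\<phi>(i := b)) w)))"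
      using pa pb Cons.prems by (intro grass_mult_add_right) auto
    finally show ?thesis by (simp only: hc)
  qed
qed

lemma eval_add_slot:
  assumes "mlin n f" "i \<in> {1..n}" "\<forall>x. grass_elem (\<phi> x)" "grass_elem a" "grass_elem b"
  shows "eval_ncpoly f (\<phi>(i := gadd a b)) = gadd (eval_ncpoly f (\<phi>(i := a))) (eval_ncpoly f (\<phi>(i := b)))"
proof -
  have "grass_prod (map (\<phi>(i := gadd a b)) w) U =
     grass_prod (map (\<phi>(i := a)) w) U + grass_prod (map (\<phi>(i := b)) w) U" if "f w \<noteq> 0" for w U
    using grass_prod_add_slot[of w \<phi> a b i] assms that unfolding mlin_def by (simp add: gadd_def)
  then show ?thesis unfolding eval_ncpoly_def gadd_def
    by (intro ext) (simp add: sum.distrib[symmetric] ring_distribs)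
qed

lemma gpd_iff:
  "distinct w \<Longrightarrow> gpd S w \<longleftrightarrow> (\<forall>x\<in>set w. \<forall>y\<in>set w. x \<noteq> y \<longrightarrow> S x \<inter> S y = {})"
proof (induction w)
  case Nil then show ?case by simp
next
  case (Cons a w)
  then have IH: "gpd S w \<longleftrightarrow> (\<forall>x\<in>set w. \<forall>y\<in>set w. x \<noteq> y \<longrightarrow> S x \<inter> S y = {})" by simp
  have aw: "a \<notin> set w" using Cons by simp
  show ?case
  proof
    assume "gpd S (a # w)"
    then have A: "S a \<inter> \<Union>(S ` set w) = {}" and B: "\<forall>x\<in>set w. \<forall>y\<in>set w. x \<noteq> y \<longrightarrow> S x \<inter> S y = {}"
      using IH by auto
    have C: "S a \<inter> S y = {}" if "y \<in> set w" for y using A that by blast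
    show "\<forall>x\<in>set (a # w). \<forall>y\<in>set (a # w). x \<noteq> y \<longrightarrow> S x \<inter> S y = {}"
    proof (intro ballI impI)
      fix x y assume xy: "x \<in> set (a # w)" "y \<in> set (a # w)" "x \<noteq> y"
      show "S x \<inter> S y = {}"
      proof (cases "x = a")
        case True then show ?thesis using C xy by auto
      next
        case False
        then have x: "x \<in> set w" using xy by simp
        show ?thesis
        proof (cases "y = a")
          case True then show ?thesis using C[OF x] by (simp add: Int_commute)
        next
          case False then show ?thesis using B x xy by simp
        qed
      qed
    qed
  next
    assume H: "\<forall>x\<in>set (a # w). \<forall>y\<in>set (a # w). x \<noteq> y \<longrightarrow> S x \<inter> S y = {}"
    have "S a \<inter> \<Union>(S ` set w) = {}"
    proof (rule equals0I)
      fix z assume "z \<in> S a \<inter> \<Union>(S ` set w)"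
      then obtain y where y: "y \<in> set w" "z \<in> S a" "z \<in> S y" by blast
      have "a \<noteq> y" using aw y(1) by blast
      then have "S a \<inter> S y = {}" using H y(1) by simp
      then show False using y by blast
    qed
    moreover have "gpd S w" using IH H by simp
    ultimately show "gpd S (a # w)" by simp
  qed
qed

lemma eval_gmono:
  assumes "mlin n f"
  shows "eval_ncpoly f (\<lambda>i. gmono (c i) (S i)) =
    (if (\<forall>x\<in>{1..n}. \<forall>y\<in>{1..n}. x \<noteq> y \<longrightarrow> S x \<inter> S y = {})
     then gmono ((\<Prod>i=1..n. c i) * (\<Sum>w\<in>{w. f w \<noteq> 0}. f w * (gQ S w :: 'a::comm_ring_1))) (\<Union>(S ` {1..n}))
     else (\<lambda>U. 0))"
proof -
  let ?PD = "\<forall>x\<in>{1..n}. \<forall>y\<in>{1..n}. x \<noteq> y \<longrightarrow> S x \<inter> S y = {}"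
  have w: "grass_prod (map (\<lambda>i. gmono (c i) (S i)) w) =
     (if ?PD then gmono ((\<Prod>i=1..n. c i) * gQ S w) (\<Union>(S ` {1..n})) else (\<lambda>U. 0))"
    if "f w \<noteq> 0" for w
  proof -
    have d: "distinct w" "set w = {1..n}" using assms that unfolding mlin_def by auto
    have "prod_list (map c w) = (\<Prod>i=1..n. c i)"
      using d by (simp add: prod.distinct_set_conv_list[symmetric])
    then show ?thesis using d by (auto simp: grass_prod_gmono gpd_iff)
  qed
  have E: "eval_ncpoly f (\<lambda>i. gmono (c i) (S i)) = (\<lambda>U. \<Sum>w\<in>{w. f w \<noteq> 0}. f w *
     (if ?PD then gmono ((\<Prod>i=1..n. c i) * gQ S w) (\<Union>(S ` {1..n})) else (\<lambda>U. 0)) U)"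
    unfolding eval_ncpoly_def by (intro ext sum.cong refl) (simp add: w)
  show ?thesis
  proof (cases ?PD)
    case True
    show ?thesis unfolding E using True
      apply (intro ext)
      subgoal for U by (cases "U = \<Union>(S ` {1..n})") (simp_all add: gmono_def sum_distrib_left mult_ac)
      done
  next
    case False
    show ?thesis unfolding E by (simp only: False if_False) simp
  qed
qed



lemma M_upd:
  fixes n :: nat
  assumes "i \<in> {1..n}"
  shows "(\<Sum>j\<in>{1..n}. card {S. (\<phi>(i := x)) j S \<noteq> 0}) =
     card {S. x S \<noteq> 0} + (\<Sum>j\<in>{1..n} - {i}. card {S. \<phi> j S \<noteq> (0::'a::zero)})"
proof -
  have "(\<Sum>j\<in>{1..n}. card {S. (\<phi>(i := x)) j S \<noteq> 0}) =
     card {S. (\<phi>(i := x)) i S \<noteq> 0} + (\<Sum>j\<in>{1..n} - {i}. card {S. (\<phi>(i := x)) j S \<noteq> 0})"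
    using assms by (intro sum.remove) auto
  also have "(\<Sum>j\<in>{1..n} - {i}. card {S. (\<phi>(i := x)) j S \<noteq> 0}) = (\<Sum>j\<in>{1..n} - {i}. card {S. \<phi> j S \<noteq> 0})"
    by (intro sum.cong) auto
  finally show ?thesis by simp
qed

lemma card_le1_ne:
  assumes "finite A" "card A \<le> 1" "A \<noteq> {}"
  obtains x where "A = {x}"
proof -
  have "card A \<noteq> 0" using assms(1,3) by simp
  then have "card A = 1" using assms(2) by linarith
  then show ?thesis using that by (auto simp: card_1_singleton_iff)
qed

lemma multilinear_reduce:
  fixes f :: "(nat, 'a::comm_ring_1) ncpoly"
  assumes ml: "mlin n f"
    and base: "\<And>c S. (\<forall>i. finite (S i) \<and> S i \<subseteq> {1..}) \<Longrightarrow> eval_ncpoly f (\<lambda>i. gmono (c i) (S i)) = (\<lambda>U. 0)"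
  shows "(\<forall>i. grass_elem (\<phi> i)) \<Longrightarrow> eval_ncpoly f \<phi> = (\<lambda>U. 0)"
proof (induction "\<Sum>i\<in>{1..n}. card {S. \<phi> i S \<noteq> 0}" arbitrary: \<phi> rule: less_induct)
  case (less \<phi>)
  show ?case
  proof (cases "\<exists>i\<in>{1..n}. 2 \<le> card {S. \<phi> i S \<noteq> 0}")
    case True
    then obtain i where i: "i \<in> {1..n}" "2 \<le> card {S. \<phi> i S \<noteq> 0}" by blast
    then have "{S. \<phi> i S \<noteq> 0} \<noteq> {}" by (metis card.empty not_numeral_le_zero)
    then obtain S0 where S0: "\<phi> i S0 \<noteq> 0" by blast
    have gi: "grass_elem (\<phi> i)" using less.prems by auto
    then have fin: "finite {S. \<phi> i S \<noteq> 0}" and S0f: "finite S0" "S0 \<subseteq> {1..}"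
      using S0 unfolding grass_elem_def by auto
    define a where "a = gmono (\<phi> i S0) S0"
    define b where "b = (\<phi> i)(S0 := 0)"
    have ga: "grass_elem a" unfolding a_def using S0f by (rule grass_elem_gmono)
    have sb: "{S. b S \<noteq> 0} = {S. \<phi> i S \<noteq> 0} - {S0}" by (auto simp: b_def)
    have gb: "grass_elem b" using gi unfolding grass_elem_def sb by (auto simp: b_def)
    have sa: "{S. a S \<noteq> 0} = {S0}" using S0 by (auto simp: a_def gmono_def)
    have ab: "gadd a b = \<phi> i" by (auto simp: gadd_def a_def b_def gmono_def)
    have phi: "\<phi> = \<phi>(i := gadd a b)" using ab by auto
    let ?R = "\<Sum>j\<in>{1..n} - {i}. card {S. \<phi> j S \<noteq> 0}"
    have M: "(\<Sum>j\<in>{1..n}. card {S. \<phi> j S \<noteq> 0}) = card {S. \<phi> i S \<noteq> 0} + ?R"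
      using M_upd[OF i(1), of \<phi> "\<phi> i"] by simp
    have "(\<Sum>j\<in>{1..n}. card {S. (\<phi>(i := a)) j S \<noteq> 0}) < (\<Sum>j\<in>{1..n}. card {S. \<phi> j S \<noteq> 0})"
      using M M_upd[OF i(1), of \<phi> a] sa i(2) by simp
    moreover have "\<forall>j. grass_elem ((\<phi>(i := a)) j)" using less.prems ga by auto
    ultimately have ea: "eval_ncpoly f (\<phi>(i := a)) = (\<lambda>U. 0)" using less.hyps by blast
    have "card {S. b S \<noteq> 0} < card {S. \<phi> i S \<noteq> 0}"
      unfolding sb using fin S0 by (intro psubset_card_mono) auto
    then have "(\<Sum>j\<in>{1..n}. card {S. (\<phi>(i := b)) j S \<noteq> 0}) < (\<Sum>j\<in>{1..n}. card {S. \<phi> j S \<noteq> 0})"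
      using M M_upd[OF i(1), of \<phi> b] by simp
    moreover have "\<forall>j. grass_elem ((\<phi>(i := b)) j)" using less.prems gb by auto
    ultimately have eb: "eval_ncpoly f (\<phi>(i := b)) = (\<lambda>U. 0)" using less.hyps by blast
    have "eval_ncpoly f \<phi> = eval_ncpoly f (\<phi>(i := gadd a b))" using phi by simp
    also have "\<dots> = gadd (eval_ncpoly f (\<phi>(i := a))) (eval_ncpoly f (\<phi>(i := b)))"
      using eval_add_slot[OF ml i(1) less.prems ga gb] .
    finally show ?thesis using ea eb by (simp add: gadd_def)
  next
    case False
    define S where "S j = (if j \<in> {1..n} \<and> {T. \<phi> j T \<noteq> 0} \<noteq> {} then the_elem {T. \<phi> j T \<noteq> 0} else {})" for j
    define c where "c j = \<phi> j (S j)" for j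
    have eq: "\<phi> j = gmono (c j) (S j)" if j: "j \<in> {1..n}" for j
    proof (cases "{T. \<phi> j T \<noteq> 0} = {}")
      case True
      then show ?thesis by (auto simp: S_def c_def gmono_def)
    next
      case ne: False
      have "finite {T. \<phi> j T \<noteq> 0}" using less.prems unfolding grass_elem_def by auto
      moreover have "\<not> 2 \<le> card {T. \<phi> j T \<noteq> 0}" using False j by blast
      then have "card {T. \<phi> j T \<noteq> 0} \<le> 1" by linarith
      ultimately obtain T0 where T0: "{T. \<phi> j T \<noteq> 0} = {T0}" using ne card_le1_ne by blast
      then have Sj: "S j = T0" using j by (simp add: S_def)
      have z: "\<phi> j U = 0" if "U \<noteq> T0" for U
      proof (rule ccontr)
        assume "\<phi> j U \<noteq> 0"
        then have "U \<in> {T. \<phi> j T \<noteq> 0}" by simp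
        then show False using T0 that by simp
      qed
      show ?thesis
      proof (rule ext)
        fix U show "\<phi> j U = gmono (c j) (S j) U"
          using z[of U] Sj by (cases "U = T0") (simp_all add: c_def gmono_def)
      qed
    qed
    have Sf: "\<forall>j. finite (S j) \<and> S j \<subseteq> {1..}"
    proof
      fix j
      show "finite (S j) \<and> S j \<subseteq> {1..}"
      proof (cases "j \<in> {1..n} \<and> {T. \<phi> j T \<noteq> 0} \<noteq> {}")
        case True
        have "\<not> 2 \<le> card {T. \<phi> j T \<noteq> 0}" using False True by blast
        then have "card {T. \<phi> j T \<noteq> 0} \<le> 1" by linarith
        moreover have "finite {T. \<phi> j T \<noteq> 0}" using less.prems unfolding grass_elem_def by auto
        ultimately obtain T0 where T0: "{T. \<phi> j T \<noteq> 0} = {T0}" using True card_le1_ne by blast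
        then have "S j = T0" using True by (simp add: S_def)
        moreover have "\<phi> j T0 \<noteq> 0" using T0 by auto
        ultimately show ?thesis using less.prems unfolding grass_elem_def by auto
      next
        case False
        have "S j = {}" unfolding S_def by (rule if_not_P[OF False])
        then show ?thesis by simp
      qed
    qed
    have "eval_ncpoly f \<phi> = eval_ncpoly f (\<lambda>j. gmono (c j) (S j))"
      using eq by (intro eval_cong[OF ml]) auto
    also have "\<dots> = (\<lambda>U. 0)" using base[OF Sf] .
    finally show ?thesis .
  qed
qed

lemma key_sum:
  fixes f :: "(nat, 'a::comm_ring_1) ncpoly"
  assumes ml: "mlin n f"
    and fin: "\<forall>i\<in>{1..n}. finite (S i) \<and> finite (T i)"
    and dis: "\<forall>x\<in>{1..n}. \<forall>y\<in>{1..n}. x \<noteq> y \<longrightarrow> S x \<inter> S y = {} \<and> T x \<inter> T y = {}"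
    and par: "\<forall>i\<in>{1..n}. even (card (S i)) = even (card (T i))"
  shows "(\<Sum>w\<in>{w. f w \<noteq> 0}. f w * gQ S w) =
     PP (\<lambda>x y. grass_sign (S x) (S y) * grass_sign (T x) (T y)) {1..n} * (\<Sum>w\<in>{w. f w \<noteq> 0}. f w * (gQ T w :: 'a))"
proof -
  let ?P = "PP (\<lambda>x y. grass_sign (S x) (S y) * grass_sign (T x) (T y)) {1..n} :: 'a"
  have "gQ S w = ?P * gQ T w" if "f w \<noteq> 0" for w
  proof -
    have d: "distinct w" "set w = {1..n}" using ml that unfolding mlin_def by auto
    have "gQ S w = gQ S w * (gQ T w * (gQ T w :: 'a))" by (simp add: gQ_sq)
    also have "\<dots> = (gQ S w * gQ T w) * gQ T w" by (simp add: mult_ac)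
    also have "gQ S w * gQ T w = ?P"
      using gQ_pair[of w S T] d fin dis par by simp
    finally show ?thesis .
  qed
  then have "(\<Sum>w\<in>{w. f w \<noteq> 0}. f w * gQ S w) = (\<Sum>w\<in>{w. f w \<noteq> 0}. ?P * (f w * gQ T w))"
    by (intro sum.cong) (auto simp: mult_ac)
  then show ?thesis by (simp add: sum_distrib_left)
qed



lemma ren_val:
  assumes inj: "inj_on \<rho> {1..n}" and ml: "mlin n f" and fw: "f w \<noteq> 0"
  shows "rename_vars \<rho> f (map \<rho> w) = (f w :: 'a::comm_monoid_add)"
proof -
  have "{w2. f w2 \<noteq> 0 \<and> map \<rho> w2 = map \<rho> w} = {w}"
  proof (intro equalityI subsetI)
    fix w2 assume "w2 \<in> {w2. f w2 \<noteq> 0 \<and> map \<rho> w2 = map \<rho> w}"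
    then have "f w2 \<noteq> 0" "map \<rho> w2 = map \<rho> w" by auto
    moreover have "inj_on \<rho> (set w2 \<union> set w)"
      using \<open>f w2 \<noteq> 0\<close> fw ml inj unfolding mlin_def by auto
    ultimately show "w2 \<in> {w}" using inj_on_map_eq_map by blast
  qed (use fw in auto)
  then show ?thesis by (simp add: rename_vars_def)
qed

lemma ren_zero:
  assumes "w' \<notin> map \<rho> ` {w. f w \<noteq> 0}"
  shows "rename_vars \<rho> f w' = (0 :: 'a::comm_monoid_add)"
proof -
  have E: "{w. f w \<noteq> 0 \<and> map \<rho> w = w'} = {}" using assms by auto
  show ?thesis unfolding rename_vars_def E by simp
qed

lemma ren_supp:
  assumes inj: "inj_on \<rho> {1..n}" and ml: "mlin n f"
  shows "{w'. rename_vars \<rho> f w' \<noteq> 0} = map \<rho> ` {w. f w \<noteq> (0 :: 'a::comm_monoid_add)}"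
proof (intro equalityI subsetI)
  fix w' assume "w' \<in> {w'. rename_vars \<rho> f w' \<noteq> 0}"
  then show "w' \<in> map \<rho> ` {w. f w \<noteq> 0}" using ren_zero by blast
next
  fix w' assume "w' \<in> map \<rho> ` {w. f w \<noteq> 0}"
  then obtain w where "f w \<noteq> 0" "w' = map \<rho> w" by auto
  then show "w' \<in> {w'. rename_vars \<rho> f w' \<noteq> 0}" using ren_val[OF inj ml] by auto
qed

lemma inj_map_supp:
  assumes inj: "inj_on \<rho> {1..n}" and ml: "mlin n f"
  shows "inj_on (map \<rho>) {w. f w \<noteq> 0}"
proof (rule inj_onI)
  fix x y assume "x \<in> {w. f w \<noteq> 0}" "y \<in> {w. f w \<noteq> 0}" "map \<rho> x = map \<rho> y"
  moreover have "inj_on \<rho> (set x \<union> set y)" using calculation ml inj unfolding mlin_def by auto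
  ultimately show "x = y" using inj_on_map_eq_map by blast
qed

lemma eval_ren:
  assumes inj: "inj_on \<rho> {1..n}" and ml: "mlin n f"
  shows "eval_ncpoly (rename_vars \<rho> f) \<phi>' = eval_ncpoly f (\<lambda>i. \<phi>' (\<rho> i) :: 'a::comm_ring_1 grass)"
proof (rule ext)
  fix U
  have "eval_ncpoly (rename_vars \<rho> f) \<phi>' U =
     (\<Sum>w'\<in>map \<rho> ` {w. f w \<noteq> 0}. rename_vars \<rho> f w' * grass_prod (map \<phi>' w') U)"
    unfolding eval_ncpoly_def ren_supp[OF inj ml] ..
  also have "\<dots> = (\<Sum>w\<in>{w. f w \<noteq> 0}. rename_vars \<rho> f (map \<rho> w) * grass_prod (map \<phi>' (map \<rho> w)) U)"
    by (rule sum.reindex[OF inj_map_supp[OF inj ml], unfolded comp_def])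
  also have "\<dots> = (\<Sum>w\<in>{w. f w \<noteq> 0}. f w * grass_prod (map (\<lambda>i. \<phi>' (\<rho> i)) w) U)"
    by (intro sum.cong refl) (simp add: ren_val[OF inj ml] comp_def)
  finally show "eval_ncpoly (rename_vars \<rho> f) \<phi>' U = eval_ncpoly f (\<lambda>i. \<phi>' (\<rho> i)) U"
    unfolding eval_ncpoly_def .
qed

lemma gmono_zero: "gmono 0 A = (\<lambda>U. 0)"
  by (simp add: gmono_def)

lemma transfer:
  fixes \<rho> :: "nat \<Rightarrow> int \<times> nat" and \<rho>' :: "int \<times> nat \<Rightarrow> nat" and \<delta> :: "nat \<Rightarrow> int"
  assumes r1: "\<forall>i\<in>{1..n}. \<rho> i \<in> V \<and> \<rho>' (\<rho> i) = i"
    and r2: "\<forall>v\<in>V. \<rho>' v \<in> {1..n} \<and> \<rho> (\<rho>' v) = v"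
    and good: "\<forall>p. \<exists>T. (\<forall>i. finite (T i) \<and> T i \<subseteq> {1..}) \<and>
        (\<forall>x\<in>{1..n}. \<forall>y\<in>{1..n}. x \<noteq> y \<longrightarrow> T x \<inter> T y = {}) \<and>
        (\<forall>i\<in>{1..n}. even (card (T i)) = p i \<and> (\<Sum>a\<in>T i. \<delta> a) = fst (\<rho> i))"
  shows "rename_vars \<rho> ` (multilin_ord n \<inter> (ordinary_ids :: (nat, 'a::comm_ring_1) ncpoly set)) =
     {g. \<forall>w. g w \<noteq> 0 \<longrightarrow> distinct w \<and> set w = V} \<inter> graded_ids \<delta>"
proof -
  have inj: "inj_on \<rho> {1..n}" using r1 by (metis inj_onI)
  have imgV: "\<rho> ` {1..n} = V" using r1 r2 by force
  have img1: "\<rho>' ` V = {1..n}" using r1 r2 by force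
  show ?thesis
  proof (intro equalityI subsetI)
    fix g assume "g \<in> rename_vars \<rho> ` (multilin_ord n \<inter> (ordinary_ids :: (nat, 'a) ncpoly set))"
    then obtain f where f: "f \<in> multilin_ord n" "f \<in> (ordinary_ids :: (nat, 'a) ncpoly set)"
      and g: "g = rename_vars \<rho> f" by auto
    have ml: "mlin n f" using f(1) by (simp add: mlin_def multilin_ord_def)
    have "distinct w \<and> set w = V" if "g w \<noteq> 0" for w
    proof -
      from that have "w \<in> map \<rho> ` {w. f w \<noteq> 0}" using ren_supp[OF inj ml] g by auto
      then obtain w0 where "f w0 \<noteq> 0" "w = map \<rho> w0" by auto
      moreover have "distinct w0" "set w0 = {1..n}" using ml \<open>f w0 \<noteq> 0\<close> unfolding mlin_def by auto
      ultimately show ?thesis using inj imgV by (auto simp: distinct_map intro: inj_on_subset)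
    qed
    moreover have "g \<in> graded_ids \<delta>"
      unfolding graded_ids_def
    proof (intro CollectI conjI allI impI)
      have "finite {w. f w \<noteq> 0}" using f(2) by (simp add: ordinary_ids_def ncpoly_def)
      then show "ncpoly g" unfolding ncpoly_def g ren_supp[OF inj ml] by simp
    next
      fix \<phi>' :: "int \<times> nat \<Rightarrow> 'a grass" assume A: "\<forall>v. \<phi>' v \<in> grass_comp \<delta> (fst v)"
      have "grass_elem (\<phi>' v)" for v using A[rule_format, of v] by (simp add: grass_comp_def)
      then have "\<forall>i. grass_elem (\<phi>' (\<rho> i))" by blast
      then have "eval_ncpoly f (\<lambda>i. \<phi>' (\<rho> i)) = grass_zero"
        using f(2) by (simp add: ordinary_ids_def)
      then show "eval_ncpoly g \<phi>' = grass_zero" unfolding g eval_ren[OF inj ml] .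
    qed
    ultimately show "g \<in> {g. \<forall>w. g w \<noteq> 0 \<longrightarrow> distinct w \<and> set w = V} \<inter> graded_ids \<delta>" by auto
  next
    fix g :: "(int \<times> nat, 'a) ncpoly"
    assume gA: "g \<in> {g. \<forall>w. g w \<noteq> 0 \<longrightarrow> distinct w \<and> set w = V} \<inter> graded_ids \<delta>"
    define f where "f w = (if distinct w \<and> set w = {1..n} then g (map \<rho> w) else 0)" for w
    have ml: "mlin n f" by (simp add: mlin_def f_def)
    have gf: "rename_vars \<rho> f = g"
    proof (rule ext)
      fix w'
      show "rename_vars \<rho> f w' = g w'"
      proof (cases "w' \<in> map \<rho> ` {w. f w \<noteq> 0}")
        case True
        then obtain w where w: "f w \<noteq> 0" "w' = map \<rho> w" by auto
        then have "distinct w \<and> set w = {1..n}" by (simp add: f_def split: if_splits)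
        then have "f w = g (map \<rho> w)" by (simp add: f_def)
        then show ?thesis using w(2) ren_val[OF inj ml w(1)] by simp
      next
        case False
        have "g w' = 0"
        proof (rule ccontr)
          assume "g w' \<noteq> 0"
          then have w': "distinct w'" "set w' = V" using gA by auto
          define w where "w = map \<rho>' w'"
          have mw: "map \<rho> w = w'" unfolding w_def map_map using w' r2 by (intro map_idI) auto
          have "distinct w" using w' mw by (metis distinct_map)
          moreover have "set w = {1..n}" unfolding w_def using w' img1 by simp
          ultimately have "f w = g w'" using mw by (simp add: f_def)
          then have "w' \<in> map \<rho> ` {w. f w \<noteq> 0}" using mw \<open>g w' \<noteq> 0\<close> by auto
          then show False using False by blast
        qed
        then show ?thesis using ren_zero[OF False] by simp
      qed
    qed
    have "f \<in> multilin_ord n" using ml by (simp add: mlin_def multilin_ord_def)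
    moreover have "f \<in> ordinary_ids"
      unfolding ordinary_ids_def
    proof (intro CollectI conjI allI impI)
      have "{w. f w \<noteq> 0} \<subseteq> {xs. set xs \<subseteq> {1..n} \<and> length xs = n}"
      proof
        fix w assume "w \<in> {w. f w \<noteq> 0}"
        then have "distinct w" "set w = {1..n}" using ml unfolding mlin_def by auto
        then have "length w = n" by (metis card_atLeastAtMost diff_Suc_1 distinct_card)
        then show "w \<in> {xs. set xs \<subseteq> {1..n} \<and> length xs = n}" using \<open>set w = {1..n}\<close> by simp
      qed
      then show "ncpoly f" unfolding ncpoly_def
        by (rule finite_subset) (rule finite_lists_length_eq, simp)
    next
      fix \<phi> :: "nat \<Rightarrow> 'a grass" assume ph: "\<forall>i. grass_elem (\<phi> i)"
      have "eval_ncpoly f \<phi> = (\<lambda>U. 0)"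
      proof (rule multilinear_reduce[OF ml _ ph])
        fix c and S :: "nat \<Rightarrow> nat set"
        assume Sf: "\<forall>i. finite (S i) \<and> S i \<subseteq> {1..}"
        let ?PD = "\<forall>x\<in>{1..n}. \<forall>y\<in>{1..n}. x \<noteq> y \<longrightarrow> S x \<inter> S y = {}"
        show "eval_ncpoly f (\<lambda>i. gmono (c i) (S i)) = (\<lambda>U. 0)"
        proof (cases ?PD)
          case False
          then show ?thesis by (simp only: eval_gmono[OF ml] if_False)
        next
          case PD: True
          obtain T where T: "\<forall>i. finite (T i) \<and> T i \<subseteq> {1..}"
            "\<forall>x\<in>{1..n}. \<forall>y\<in>{1..n}. x \<noteq> y \<longrightarrow> T x \<inter> T y = {}"
            "\<forall>i\<in>{1..n}. even (card (T i)) = even (card (S i)) \<and> (\<Sum>a\<in>T i. \<delta> a) = fst (\<rho> i)"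
            using good[rule_format, of "\<lambda>i. even (card (S i))"] by blast
          define \<phi>' where "\<phi>' v = (if v \<in> V then gmono (1::'a) (T (\<rho>' v)) else (\<lambda>U. 0))" for v
          have "\<phi>' v \<in> grass_comp \<delta> (fst v)" for v
          proof (cases "v \<in> V")
            case True
            then have v: "\<rho>' v \<in> {1..n}" "\<rho> (\<rho>' v) = v" using r2 by auto
            show ?thesis unfolding grass_comp_def
            proof (intro CollectI conjI allI impI)
              show "grass_elem (\<phi>' v)" using True T(1) by (simp add: \<phi>'_def grass_elem_gmono)
            next
              fix S' assume "\<phi>' v S' \<noteq> 0"
              then have "S' = T (\<rho>' v)" using True by (simp add: \<phi>'_def gmono_def split: if_splits)
              then show "(\<Sum>i\<in>S'. \<delta> i) = fst v" using T(3) v by auto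
            qed
          next
            case False
            then show ?thesis by (simp add: grass_comp_def \<phi>'_def grass_elem_zero)
          qed
          moreover have "g \<in> graded_ids \<delta>" using gA by blast
          ultimately have "eval_ncpoly g \<phi>' = grass_zero" unfolding graded_ids_def by blast
          then have "eval_ncpoly f (\<lambda>i. \<phi>' (\<rho> i)) = (\<lambda>U. 0)"
            unfolding gf[symmetric] eval_ren[OF inj ml] by (simp add: grass_zero_def)
          moreover have "eval_ncpoly f (\<lambda>i. \<phi>' (\<rho> i)) = eval_ncpoly f (\<lambda>i. gmono ((\<lambda>_. 1) i) (T i))"
            using r1 by (intro eval_cong[OF ml]) (auto simp: \<phi>'_def)
          ultimately have "eval_ncpoly f (\<lambda>i. gmono ((\<lambda>_. 1) i) (T i)) = (\<lambda>U. 0)" by simp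
          moreover have "eval_ncpoly f (\<lambda>i. gmono ((\<lambda>_. 1) i) (T i)) =
              gmono ((\<Prod>i=1..n. (\<lambda>_. 1::'a) i) * (\<Sum>w\<in>{w. f w \<noteq> 0}. f w * gQ T w)) (\<Union>(T ` {1..n}))"
            unfolding eval_gmono[OF ml] by (rule if_P[OF T(2)])
          ultimately have "gmono (\<Sum>w\<in>{w. f w \<noteq> 0}. f w * gQ T w) (\<Union>(T ` {1..n})) = (\<lambda>U. (0::'a))"
            by simp
          then have "gmono (\<Sum>w\<in>{w. f w \<noteq> 0}. f w * gQ T w) (\<Union>(T ` {1..n})) (\<Union>(T ` {1..n})) = (0::'a)"
            by (rule fun_cong)
          then have z: "(\<Sum>w\<in>{w. f w \<noteq> 0}. f w * gQ T w) = (0::'a)"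
            by (simp add: gmono_def)
          have "(\<Sum>w\<in>{w. f w \<noteq> 0}. f w * gQ S w) =
             PP (\<lambda>x y. grass_sign (S x) (S y) * grass_sign (T x) (T y)) {1..n} * (\<Sum>w\<in>{w. f w \<noteq> 0}. f w * (gQ T w :: 'a))"
            using PD T Sf by (intro key_sum[OF ml]) auto
          then have "(\<Sum>w\<in>{w. f w \<noteq> 0}. f w * gQ S w) = (0::'a)" using z by simp
          then show ?thesis by (simp only: eval_gmono[OF ml] PD if_True) (simp add: gmono_zero)
        qed
      qed
      then show "eval_ncpoly f \<phi> = grass_zero" by (simp add: grass_zero_def)
    qed
    ultimately show "g \<in> rename_vars \<rho> ` (multilin_ord n \<inter> ordinary_ids)" using gf by auto
  qed
qed



lemma psum_0: "psum l 0 = 0" by (simp add: psum_def)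

lemma psum_Suc: "psum l (Suc j) = psum l j + l (Suc j)"
  by (simp add: psum_def)

lemma psum_mono: "a \<le> b \<Longrightarrow> psum l a \<le> psum l b"
  unfolding psum_def by (rule sum_mono2) auto

lemma least_block:
  assumes "1 \<le> j" "1 \<le> r" "r \<le> l j"
  shows "(LEAST j'. psum l (j - 1) + r \<le> psum l j') = j"
proof (rule Least_equality)
  have "psum l j = psum l (j - 1) + l j" using assms(1) psum_Suc[of l "j - 1"] by simp
  then show "psum l (j - 1) + r \<le> psum l j" using assms by simp
next
  fix y assume y: "psum l (j - 1) + r \<le> psum l y"
  show "j \<le> y"
  proof (rule ccontr)
    assume "\<not> j \<le> y"
    then have "psum l y \<le> psum l (j - 1)" by (intro psum_mono) auto
    then show False using y assms(2) by simp
  qed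
qed

lemma psi_block:
  assumes "1 \<le> j" "j \<le> t" "1 \<le> r" "r \<le> l j"
  shows "psi_var t l (psum l (j - 1) + r) = (int j, r)"
proof -
  have "psum l j = psum l (j - 1) + l j" using assms(1) psum_Suc[of l "j - 1"] by simp
  moreover have "psum l j \<le> psum l t" using assms(2) by (rule psum_mono)
  ultimately have c: "psum l (j - 1) + r \<le> psum l t" using assms by simp
  show ?thesis unfolding psi_var_def Let_def using c least_block[of j r l, OF assms(1,3,4)] by simp
qed

lemma psi_z:
  assumes "1 \<le> r"
  shows "psi_var t l (psum l t + r) = (0, r)"
  using assms by (simp add: psi_var_def)

lemma psi_cases:
  assumes "1 \<le> i" "i \<le> psum l t + m"
  obtains j r where "1 \<le> j" "j \<le> t" "1 \<le> r" "r \<le> l j" "i = psum l (j - 1) + r"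
    | r where "1 \<le> r" "r \<le> m" "i = psum l t + r"
proof (cases "i \<le> psum l t")
  case True
  define j0 where "j0 = (LEAST j. i \<le> psum l j)"
  have a: "i \<le> psum l j0" unfolding j0_def using True by (rule LeastI)
  have b: "j0 \<le> t" unfolding j0_def using True by (rule Least_le)
  have c: "j0 \<noteq> 0"
  proof
    assume "j0 = 0"
    then have "psum l j0 = 0" by (simp add: psum_0)
    then show False using a assms(1) by simp
  qed
  have d: "\<not> i \<le> psum l (j0 - 1)" unfolding j0_def
    by (rule not_less_Least) (use c in \<open>simp add: j0_def\<close>)
  have e: "psum l j0 = psum l (j0 - 1) + l j0" using c psum_Suc[of l "j0 - 1"] by simp
  show ?thesis
    by (rule that(1)[of j0 "i - psum l (j0 - 1)"]) (use a b c d e in auto)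
next
  case False
  then show ?thesis using assms by (intro that(2)[of "i - psum l t"]) auto
qed

definition psi_inv :: "nat \<Rightarrow> (nat \<Rightarrow> nat) \<Rightarrow> int \<times> nat \<Rightarrow> nat" where
  "psi_inv t l v = (if fst v = 0 then psum l t + snd v else psum l (nat (fst v) - 1) + snd v)"

lemma psi_r1:
  assumes "i \<in> {1..psum l t + m}"
  shows "psi_var t l i \<in> graded_vars m t l \<and> psi_inv t l (psi_var t l i) = i"
  using assms
proof -
  from assms have "1 \<le> i" "i \<le> psum l t + m" by auto
  then show ?thesis
  proof (cases rule: psi_cases)
    case (1 j r)
    then show ?thesis using psi_block[of j t r l, OF 1(1-4)] by (auto simp: graded_vars_def psi_inv_def)
  next
    case (2 r)
    then show ?thesis using psi_z[OF 2(1), of t l] by (auto simp: graded_vars_def psi_inv_def)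
  qed
qed

lemma psi_r2:
  assumes "v \<in> graded_vars m t l"
  shows "psi_inv t l v \<in> {1..psum l t + m} \<and> psi_var t l (psi_inv t l v) = v"
  using assms unfolding graded_vars_def
proof (elim UnE CollectE exE conjE)
  fix i assume "v = (0, i)" "1 \<le> i" "i \<le> m"
  then show ?thesis using psi_z[of i t l] by (simp add: psi_inv_def)
next
  fix j i assume v: "v = (int j, i)" "1 \<le> j" "j \<le> t" "1 \<le> i" "i \<le> l j"
  have "psum l j = psum l (j - 1) + l j" using v(2) psum_Suc[of l "j - 1"] by simp
  moreover have "psum l j \<le> psum l t" using v(3) by (rule psum_mono)
  ultimately have "psum l (j - 1) + i \<le> psum l t + m" using v by simp
  then show ?thesis using psi_block[of j t i l, OF v(2-5)] v by (simp add: psi_inv_def)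
qed

lemma good_construct:
  fixes d g h :: "nat \<Rightarrow> nat" and \<delta> :: "nat \<Rightarrow> int" and n :: nat
  assumes ginj: "inj g" and g1: "\<forall>r. 1 \<le> g r" and h1: "\<forall>i. 1 \<le> h i"
    and hinj: "inj_on h {1..n}"
    and gd: "\<forall>r < (\<Sum>i\<in>{1..n}. d i). \<delta> (g r) = 1"
    and hd: "\<forall>i\<in>{1..n}. \<delta> (h i) = 0"
    and gh: "\<forall>r < (\<Sum>i\<in>{1..n}. d i). \<forall>i\<in>{1..n}. g r \<noteq> h i"
  shows "\<exists>T. (\<forall>i. finite (T i) \<and> T i \<subseteq> {1..}) \<and>
        (\<forall>x\<in>{1..n}. \<forall>y\<in>{1..n}. x \<noteq> y \<longrightarrow> T x \<inter> T y = {}) \<and>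
        (\<forall>i\<in>{1..n}. even (card (T i)) = p i \<and> (\<Sum>a\<in>T i. \<delta> a) = int (d i))"
proof -
  define off where "off i = (\<Sum>i'\<in>{1..<i}. d i')" for i
  have oS: "off (Suc i) = off i + d i" if "1 \<le> i" for i
    using that by (simp add: off_def sum.atLeastLessThan_Suc)
  have omono: "off a \<le> off b" if "a \<le> b" for a b
    unfolding off_def using that by (intro sum_mono2) auto
  have tot: "off (Suc n) = (\<Sum>i\<in>{1..n}. d i)"
    by (simp add: off_def atLeastLessThanSuc_atLeastAtMost)
  have bnd: "off i + d i \<le> (\<Sum>i\<in>{1..n}. d i)" if "i \<in> {1..n}" for i
    using that oS[of i] omono[of "Suc i" "Suc n"] tot by auto
  have sep: "off x + d x \<le> off y" if "1 \<le> x" "x < y" for x y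
    using that oS[of x] omono[of "Suc x" y] by auto
  define T where "T i = g ` {off i..<off i + d i} \<union> (if even (d i) = p i then {} else {h i})" for i
  have fin: "\<forall>i. finite (T i) \<and> T i \<subseteq> {1..}" using g1 h1 by (auto simp: T_def)
  have dis: "T x \<inter> T y = {}" if "x \<in> {1..n}" "y \<in> {1..n}" "x \<noteq> y" for x y
  proof -
    have A: "g ` {off x..<off x + d x} \<inter> g ` {off y..<off y + d y} = {}"
    proof -
      have "{off x..<off x + d x} \<inter> {off y..<off y + d y} = {}"
        using that sep[of x y] sep[of y x] by (cases "x < y") auto
      then show ?thesis using ginj by (simp add: image_Int[symmetric])
    qed
    have B: "h x \<noteq> h y" using hinj that by (auto dest: inj_onD)
    have C: "g r \<noteq> h i" if "r < off z + d z" "z \<in> {1..n}" "i \<in> {1..n}" for r z i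
      using gh bnd[OF that(2)] that by auto
    let ?Gx = "g ` {off x..<off x + d x}" and ?Gy = "g ` {off y..<off y + d y}"
    let ?Fx = "(if even (d x) = p x then {} else {h x})" and ?Fy = "(if even (d y) = p y then {} else {h y})"
    have "h y \<notin> ?Gx"
    proof
      assume "h y \<in> ?Gx"
      then obtain r where "r \<in> {off x..<off x + d x}" "h y = g r" by blast
      then show False using C[of r x y] that by simp
    qed
    then have D1: "?Gx \<inter> ?Fy = {}" by auto
    have "h x \<notin> ?Gy"
    proof
      assume "h x \<in> ?Gy"
      then obtain r where "r \<in> {off y..<off y + d y}" "h x = g r" by blast
      then show False using C[of r y x] that by simp
    qed
    then have D2: "?Fx \<inter> ?Gy = {}" by auto
    have D3: "?Fx \<inter> ?Fy = {}" using B by auto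
    have "T x \<inter> T y = (?Gx \<inter> ?Gy \<union> ?Gx \<inter> ?Fy) \<union> (?Fx \<inter> ?Gy \<union> ?Fx \<inter> ?Fy)"
      unfolding T_def by (simp only: Int_Un_distrib Int_Un_distrib2 Un_ac)
    then show ?thesis using A D1 D2 D3 by simp
  qed
  have props: "even (card (T i)) = p i \<and> (\<Sum>a\<in>T i. \<delta> a) = int (d i)" if i: "i \<in> {1..n}" for i
  proof -
    let ?G = "g ` {off i..<off i + d i}"
    let ?F = "(if even (d i) = p i then {} else {h i})"
    have cG: "card ?G = d i" using ginj by (simp add: card_image inj_on_subset)
    have "h i \<notin> ?G"
    proof
      assume "h i \<in> ?G"
      then obtain r where r: "r \<in> {off i..<off i + d i}" "h i = g r" by blast
      then have "r < (\<Sum>i\<in>{1..n}. d i)" using bnd[OF i] by simp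
      then have "g r \<noteq> h i" using gh i by blast
      then show False using r by simp
    qed
    then have dGF: "?G \<inter> ?F = {}" by auto
    have "card (T i) = d i + card ?F"
      unfolding T_def using dGF cG by (subst card_Un_disjoint) auto
    then have c: "even (card (T i)) = p i" by auto
    have "(\<Sum>a\<in>T i. \<delta> a) = (\<Sum>a\<in>?G. \<delta> a) + (\<Sum>a\<in>?F. \<delta> a)"
      unfolding T_def using dGF by (subst sum.union_disjoint) auto
    also have "(\<Sum>a\<in>?F. \<delta> a) = 0" using hd i by auto
    also have "(\<Sum>a\<in>?G. \<delta> a) = (\<Sum>r\<in>{off i..<off i + d i}. \<delta> (g r))"
      using ginj by (simp add: sum.reindex inj_on_subset)
    also have "\<dots> = (\<Sum>r\<in>{off i..<off i + d i}. 1)"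
      using gd bnd[OF i] by (intro sum.cong) auto
    finally show ?thesis using c by simp
  qed
  show ?thesis
  proof (intro exI[of _ T] conjI)
    show "\<forall>i. finite (T i) \<and> T i \<subseteq> {1..}" by (rule fin)
    show "\<forall>x\<in>{1..n}. \<forall>y\<in>{1..n}. x \<noteq> y \<longrightarrow> T x \<inter> T y = {}" using dis by blast
    show "\<forall>i\<in>{1..n}. even (card (T i)) = p i \<and> (\<Sum>a\<in>T i. \<delta> a) = int (d i)" using props by blast
  qed
qed



lemma total_deg:
  assumes "s \<le> t"
  shows "(\<Sum>i\<in>{1..psum l s}. nat (fst (psi_var t l i))) = (\<Sum>j=1..s. j * l j)"
  using assms
proof (induction s)
  case 0
  then show ?case by (simp add: psum_0)
next
  case (Suc s)
  have "(\<Sum>i\<in>{1..psum l (Suc s)}. nat (fst (psi_var t l i))) =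
     (\<Sum>i\<in>{1..psum l s + l (Suc s)}. nat (fst (psi_var t l i)))" by (simp add: psum_Suc)
  also have "\<dots> = (\<Sum>i\<in>{1..psum l s}. nat (fst (psi_var t l i))) +
      (\<Sum>i\<in>{psum l s + 1..psum l s + l (Suc s)}. nat (fst (psi_var t l i)))"
    by (rule sum.ub_add_nat) simp
  also have "(\<Sum>i\<in>{psum l s + 1..psum l s + l (Suc s)}. nat (fst (psi_var t l i))) =
      (\<Sum>i\<in>{psum l s + 1..psum l s + l (Suc s)}. Suc s)"
  proof (intro sum.cong refl)
    fix i assume i: "i \<in> {psum l s + 1..psum l s + l (Suc s)}"
    have "psi_var t l (psum l (Suc s - 1) + (i - psum l s)) = (int (Suc s), i - psum l s)"
      using i Suc.prems by (intro psi_block) auto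
    moreover have "psum l (Suc s - 1) + (i - psum l s) = i" using i by simp
    ultimately show "nat (fst (psi_var t l i)) = Suc s" by simp
  qed
  also have "\<dots> = l (Suc s) * Suc s" by simp
  finally show ?case using Suc by simp
qed

lemma total_deg_all:
  assumes "n = psum l t + m"
  shows "(\<Sum>i\<in>{1..n}. nat (fst (psi_var t l i))) = (\<Sum>j=1..t. j * l j)"
proof -
  have "(\<Sum>i\<in>{1..n}. nat (fst (psi_var t l i))) =
     (\<Sum>i\<in>{1..psum l t}. nat (fst (psi_var t l i))) + (\<Sum>i\<in>{psum l t + 1..psum l t + m}. nat (fst (psi_var t l i)))"
    unfolding assms by (rule sum.ub_add_nat) simp
  also have "(\<Sum>i\<in>{psum l t + 1..psum l t + m}. nat (fst (psi_var t l i))) = 0"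
  proof (intro sum.neutral ballI)
    fix i assume i: "i \<in> {psum l t + 1..psum l t + m}"
    have "psi_var t l (psum l t + (i - psum l t)) = (0, i - psum l t)"
      using i by (intro psi_z) auto
    moreover have "psum l t + (i - psum l t) = i" using i by simp
    ultimately show "nat (fst (psi_var t l i)) = 0" by simp
  qed
  finally show ?thesis using total_deg[of t t l] by simp
qed

lemma fst_nonneg:
  assumes "n = psum l t + m" "i \<in> {1..n}"
  shows "int (nat (fst (psi_var t l i))) = fst (psi_var t l i)"
proof -
  have "psi_var t l i \<in> graded_vars m t l" using psi_r1[of i l t m] assms by simp
  then have "fst (psi_var t l i) \<ge> 0" unfolding graded_vars_def by auto
  then show ?thesis by simp
qed

lemma main_general:
  fixes \<delta> :: "nat \<Rightarrow> int" and g h :: "nat \<Rightarrow> nat"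
  assumes n: "n = psum l t + m"
    and ginj: "inj g" and g1: "\<forall>r. 1 \<le> g r" and h1: "\<forall>i. 1 \<le> h i"
    and hinj: "inj_on h {1..n}"
    and gd: "\<forall>r < (\<Sum>j=1..t. j * l j). \<delta> (g r) = 1"
    and hd: "\<forall>i\<in>{1..n}. \<delta> (h i) = 0"
    and gh: "\<forall>r < (\<Sum>j=1..t. j * l j). \<forall>i\<in>{1..n}. g r \<noteq> h i"
  shows "rename_vars (psi_var t l) ` (multilin_ord n \<inter> (ordinary_ids :: (nat, 'a::comm_ring_1) ncpoly set))
           = multilin_graded m t l \<inter> graded_ids \<delta>"
proof -
  have r1: "\<forall>i\<in>{1..n}. psi_var t l i \<in> graded_vars m t l \<and> psi_inv t l (psi_var t l i) = i"
    using psi_r1[of _ l t m] n by simp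
  have r2: "\<forall>v\<in>graded_vars m t l. psi_inv t l v \<in> {1..n} \<and> psi_var t l (psi_inv t l v) = v"
    using psi_r2[of _ m t l] n by simp
  have tot: "(\<Sum>i\<in>{1..n}. nat (fst (psi_var t l i))) = (\<Sum>j=1..t. j * l j)"
    using total_deg_all[OF n] .
  have good: "\<forall>p. \<exists>T. (\<forall>i. finite (T i) \<and> T i \<subseteq> {1..}) \<and>
        (\<forall>x\<in>{1..n}. \<forall>y\<in>{1..n}. x \<noteq> y \<longrightarrow> T x \<inter> T y = {}) \<and>
        (\<forall>i\<in>{1..n}. even (card (T i)) = p i \<and> (\<Sum>a\<in>T i. \<delta> a) = fst (psi_var t l i))"
  proof
    fix p
    obtain T where T: "\<forall>i. finite (T i) \<and> T i \<subseteq> {1..}"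
        "\<forall>x\<in>{1..n}. \<forall>y\<in>{1..n}. x \<noteq> y \<longrightarrow> T x \<inter> T y = {}"
        "\<forall>i\<in>{1..n}. even (card (T i)) = p i \<and> (\<Sum>a\<in>T i. \<delta> a) = int (nat (fst (psi_var t l i)))"
      using good_construct[of g h n "\<lambda>i. nat (fst (psi_var t l i))" \<delta> p] ginj g1 h1 hinj gd hd gh
      unfolding tot by blast
    show "\<exists>T. (\<forall>i. finite (T i) \<and> T i \<subseteq> {1..}) \<and>
        (\<forall>x\<in>{1..n}. \<forall>y\<in>{1..n}. x \<noteq> y \<longrightarrow> T x \<inter> T y = {}) \<and>
        (\<forall>i\<in>{1..n}. even (card (T i)) = p i \<and> (\<Sum>a\<in>T i. \<delta> a) = fst (psi_var t l i))"
    proof (intro exI[of _ T] conjI)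
      show "\<forall>i. finite (T i) \<and> T i \<subseteq> {1..}" by (rule T(1))
      show "\<forall>x\<in>{1..n}. \<forall>y\<in>{1..n}. x \<noteq> y \<longrightarrow> T x \<inter> T y = {}" by (rule T(2))
      show "\<forall>i\<in>{1..n}. even (card (T i)) = p i \<and> (\<Sum>a\<in>T i. \<delta> a) = fst (psi_var t l i)"
        using T(3) fst_nonneg[OF n] by simp
    qed
  qed
  have "rename_vars (psi_var t l) ` (multilin_ord n \<inter> (ordinary_ids :: (nat, 'a) ncpoly set)) =
     {g. \<forall>w. g w \<noteq> 0 \<longrightarrow> distinct w \<and> set w = graded_vars m t l} \<inter> graded_ids \<delta>"
    by (rule transfer[OF r1 r2 good])
  then show ?thesis by (simp add: multilin_graded_def)
qed

theorem mainTheorem3: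
  fixes k t m n :: nat and l :: "nat \<Rightarrow> nat"
  assumes "0 < k" and "1 \<le> t" and "t \<le> k"
    and "n = (\<Sum>j = 1..t. l j) + m"
  shows "rename_vars (psi_var t l) ` (multilin_ord n \<inter> (ordinary_ids :: (nat, 'a::field_char_0) ncpoly set))
           = multilin_graded m t l \<inter> graded_ids delta_inf
     \<and> ((\<Sum>j = 1..t. j * l j) \<le> k \<longrightarrow>
         rename_vars (psi_var t l) ` (multilin_ord n \<inter> (ordinary_ids :: (nat, 'a::field_char_0) ncpoly set))
           = multilin_graded m t l \<inter> graded_ids (delta_kstar k))"
proof
  have n: "n = psum l t + m" using assms(4) by (simp add: psum_def)
  show "rename_vars (psi_var t l) ` (multilin_ord n \<inter> (ordinary_ids :: (nat, 'a) ncpoly set))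
           = multilin_graded m t l \<inter> graded_ids delta_inf"
  proof (rule main_general[OF n])
    show "inj (\<lambda>r::nat. 2 * r + 1)" by (auto intro: injI)
    show "inj_on (\<lambda>i::nat. 2 * i + 2) {1..n}" by (auto intro: inj_onI)
    show "\<forall>r < (\<Sum>j=1..t. j * l j). delta_inf (2 * r + 1) = 1" by (simp add: delta_inf_def)
    show "\<forall>i\<in>{1..n}. delta_inf (2 * i + 2) = 0" by (simp add: delta_inf_def)
    show "\<forall>r < (\<Sum>j=1..t. j * l j). \<forall>i\<in>{1..n}. 2 * r + 1 \<noteq> 2 * i + (2::nat)"
    proof (intro allI impI ballI)
      fix r i :: nat show "2 * r + 1 \<noteq> 2 * i + 2" by presburger
    qed
  qed auto
  show "(\<Sum>j = 1..t. j * l j) \<le> k \<longrightarrow>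
         rename_vars (psi_var t l) ` (multilin_ord n \<inter> (ordinary_ids :: (nat, 'a) ncpoly set))
           = multilin_graded m t l \<inter> graded_ids (delta_kstar k)"
  proof
    assume K: "(\<Sum>j = 1..t. j * l j) \<le> k"
    show "rename_vars (psi_var t l) ` (multilin_ord n \<inter> (ordinary_ids :: (nat, 'a) ncpoly set))
           = multilin_graded m t l \<inter> graded_ids (delta_kstar k)"
    proof (rule main_general[OF n])
      show "inj (\<lambda>r::nat. r + 1)" by (auto intro: injI)
      show "inj_on (\<lambda>i::nat. k + i) {1..n}" by (auto intro: inj_onI)
      show "\<forall>r < (\<Sum>j=1..t. j * l j). delta_kstar k (r + 1) = 1" using K by (auto simp: delta_kstar_def)
      show "\<forall>i\<in>{1..n}. delta_kstar k (k + i) = 0" by (auto simp: delta_kstar_def)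
      show "\<forall>r < (\<Sum>j=1..t. j * l j). \<forall>i\<in>{1..n}. r + 1 \<noteq> k + i" using K by auto
    qed (use assms(1) in auto)
  qed
qed

end
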